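(* Let $p,k$ be integers with $k\ge 2$ and $p\ge 2k$, and let $G=J(p,k)$ be the Johnson graph, with $n$ vertices and $m$ edges. Let $\mu_1\ge\cdots\ge\mu_n$ be the eigenvalues of the adjacency matrix of $G$, let $n^+$ be the number of positive eigenvalues, let $\omega=\omega(G)$ be the clique number of $G$, and let $\ell=\min(n^+,\omega)$. Then \[ \mu_1^2+\mu_2^2+\cdots+\mu_\ell^2\le \frac{2m(\omega-1)}{\omega}. \]
   Context: The Johnson graph $J(p,k)$ has as vertices the $k$-element subsets of a $p$-element set, two vertices being adjacent if and only if their intersection has exactly $k-1$ elements. Eigenvalues are those of the adjacency matrix. *)

theory Defs
  imports "Jordan_Normal_Form.Char_Poly" "HOL-Library.Multiset"
begin

definition adj_matrix :: "'a set \<Rightarrow> ('a \<Rightarrow> 'a \<Rightarrow> bool) \<Rightarrow> real mat" where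
  "adj_matrix V E =
     (let vs = (SOME vs. distinct vs \<and> set vs = V)
      in mat (length vs) (length vs) (\<lambda>(i, j). if E (vs ! i) (vs ! j) then 1 else 0))"

text \<open>Eigenvalues with (algebraic) multiplicity, listed in non-increasing order:
  the real roots of the characteristic polynomial (for a real symmetric matrix these are all
  the eigenvalues).\<close>
definition eigenvalues_desc :: "real mat \<Rightarrow> real list" where
  "eigenvalues_desc A = rev (sorted_list_of_multiset (proots (char_poly A)))"

definition num_edges :: "'a set \<Rightarrow> ('a \<Rightarrow> 'a \<Rightarrow> bool) \<Rightarrow> nat" where
  "num_edges V E = card {{u, v} | u v. u \<in> V \<and> v \<in> V \<and> u \<noteq> v \<and> E u v}"

definition is_clique :: "'a set \<Rightarrow> ('a \<Rightarrow> 'a \<Rightarrow> bool) \<Rightarrow> 'a set \<Rightarrow> bool" where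
  "is_clique V E C \<longleftrightarrow> C \<subseteq> V \<and> (\<forall>x\<in>C. \<forall>y\<in>C. x \<noteq> y \<longrightarrow> E x y)"

definition clique_number :: "'a set \<Rightarrow> ('a \<Rightarrow> 'a \<Rightarrow> bool) \<Rightarrow> nat" where
  "clique_number V E = Max (card ` {C. is_clique V E C})"

definition johnson_vertices :: "nat \<Rightarrow> nat \<Rightarrow> nat set set" where
  "johnson_vertices p k = {S. S \<subseteq> {0..<p} \<and> card S = k}"

definition johnson_adj :: "nat \<Rightarrow> nat set \<Rightarrow> nat set \<Rightarrow> bool" where
  "johnson_adj k S T \<longleftrightarrow> card (S \<inter> T) = k - 1"

end

theory Submission
  imports Defs
begin


lemma JV_finite[simp]: "finite (johnson_vertices p j)"
  unfolding johnson_vertices_def by (rule finite_subset[of _ "Pow {0..<p}"]) auto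

lemma JV_card: "card (johnson_vertices p j) = p choose j"
  unfolding johnson_vertices_def using n_subsets[of "{0..<p}" j] by simp

lemma JV_mem: "S \<in> johnson_vertices p j \<longleftrightarrow> S \<subseteq> {0..<p} \<and> card S = j"
  unfolding johnson_vertices_def by simp

lemma JV_fin_el: "S \<in> johnson_vertices p j \<Longrightarrow> finite S"
  unfolding johnson_vertices_def using finite_subset by auto

definition jadj :: "nat \<Rightarrow> nat set \<Rightarrow> nat set \<Rightarrow> bool" where
  "jadj j S T \<longleftrightarrow> card (S \<inter> T) + 1 = j"

lemma sum_if_const: "finite A \<Longrightarrow> (\<Sum>x\<in>A. if P x then (c::real) else 0) = c * real (card {x\<in>A. P x})"
  by (simp add: sum.If_cases Int_def conj_commute)

lemma card_supsets:
  assumes X: "X \<subseteq> {0..<p}" "card X \<le> j"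
  shows "card {S \<in> johnson_vertices p j. X \<subseteq> S} = (p - card X) choose (j - card X)"
proof -
  have fX: "finite X" using X finite_subset by blast
  have "bij_betw (\<lambda>S. S - X) {S \<in> johnson_vertices p j. X \<subseteq> S} {B. B \<subseteq> {0..<p} - X \<and> card B = j - card X}"
  proof (rule bij_betw_byWitness[where f' = "\<lambda>B. B \<union> X"], goal_cases)
    case 1 show ?case by auto
  next
    case 2 show ?case by auto
  next
    case 3 show ?case using fX by (auto simp: JV_mem card_Diff_subset)
  next
    case 4 show ?case
    proof (rule image_subsetI)
      fix B assume "B \<in> {B. B \<subseteq> {0..<p} - X \<and> card B = j - card X}"
      then have B: "B \<subseteq> {0..<p} - X" "card B = j - card X" by auto
      have fB: "finite B" using B finite_subset by blast
      have "card (B \<union> X) = card B + card X" using B fB fX by (subst card_Un_disjoint) auto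
      then show "B \<union> X \<in> {S \<in> johnson_vertices p j. X \<subseteq> S}" using B X by (auto simp: JV_mem)
    qed
  qed
  then have "card {S \<in> johnson_vertices p j. X \<subseteq> S} = card {B. B \<subseteq> {0..<p} - X \<and> card B = j - card X}"
    by (rule bij_betw_same_card)
  also have "\<dots> = card ({0..<p} - X) choose (j - card X)" by (rule n_subsets) simp
  also have "card ({0..<p} - X) = p - card X" using X fX by (simp add: card_Diff_subset)
  finally show ?thesis .
qed

lemma card_inter_less:
  assumes S: "S \<in> johnson_vertices p j" and T: "T \<in> johnson_vertices p j" and ne: "S \<noteq> T"
  shows "card (S \<inter> T) < j"
proof -
  have fS: "finite S" using S by (rule JV_fin_el)
  have le: "card (S \<inter> T) \<le> card S" using fS by (intro card_mono) auto
  have "card (S \<inter> T) \<noteq> card S"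
  proof
    assume "card (S \<inter> T) = card S"
    then have "S \<inter> T = S" using fS by (intro card_subset_eq) auto
    then have "S \<subseteq> T" by auto
    moreover have "finite T" using T by (rule JV_fin_el)
    ultimately have "S = T" using S T by (intro card_subset_eq) (auto simp: JV_mem)
    with ne show False by simp
  qed
  with le S show ?thesis by (auto simp: JV_mem)
qed

lemma jadj_irrefl: "S \<in> johnson_vertices p j \<Longrightarrow> \<not> jadj j S S"
  by (auto simp: jadj_def JV_mem)

lemma count_sub:
  assumes S: "S \<in> johnson_vertices p j" and T: "T \<in> johnson_vertices p j" and j: "j \<ge> 1"
  shows "card {R \<in> johnson_vertices p (j-1). R \<subseteq> S \<and> R \<subseteq> T} = (if S = T then j else if jadj j S T then 1 else 0)"
proof -
  have fST: "finite (S \<inter> T)" using S JV_fin_el by blast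
  have "{R \<in> johnson_vertices p (j-1). R \<subseteq> S \<and> R \<subseteq> T} = {R. R \<subseteq> S \<inter> T \<and> card R = j - 1}"
    using S T by (auto simp: JV_mem)
  then have c: "card {R \<in> johnson_vertices p (j-1). R \<subseteq> S \<and> R \<subseteq> T} = card (S \<inter> T) choose (j-1)"
    using n_subsets[OF fST] by simp
  show ?thesis
  proof (cases "S = T")
    case True
    then have "card (S \<inter> T) = j" using S by (simp add: JV_mem)
    then show ?thesis using c True j binomial_symmetric[of "j-1" j] by simp
  next
    case False
    have lt: "card (S \<inter> T) < j" by (rule card_inter_less[OF S T False])
    show ?thesis
    proof (cases "jadj j S T")
      case True
      then have "card (S \<inter> T) = j - 1" by (simp add: jadj_def)
      then show ?thesis using c True False by simp
    next
      case False2: False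
      then have "card (S \<inter> T) < j - 1" using lt by (auto simp: jadj_def)
      then show ?thesis using c False False2 by (simp add: binomial_eq_0)
    qed
  qed
qed

lemma count_sup:
  assumes R: "R \<in> johnson_vertices p (j-1)" and R': "R' \<in> johnson_vertices p (j-1)"
    and j: "j \<ge> 1" "j \<le> p"
  shows "card {S \<in> johnson_vertices p j. R \<subseteq> S \<and> R' \<subseteq> S} = (if R = R' then p + 1 - j else if jadj (j-1) R R' then 1 else 0)"
proof -
  have fR: "finite R" "finite R'" using R R' JV_fin_el by blast+
  have eq: "{S \<in> johnson_vertices p j. R \<subseteq> S \<and> R' \<subseteq> S} = {S \<in> johnson_vertices p j. R \<union> R' \<subseteq> S}" by auto
  have sub: "R \<union> R' \<subseteq> {0..<p}" using R R' by (auto simp: JV_mem)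
  have cu: "card (R \<union> R') + card (R \<inter> R') = 2 * (j - 1)"
    using card_Un_Int[OF fR] R R' by (simp add: JV_mem)
  show ?thesis
  proof (cases "R = R'")
    case True
    then have "card (R \<union> R') = j - 1" using R by (simp add: JV_mem)
    then show ?thesis unfolding eq using card_supsets[OF sub, of j] True j by simp
  next
    case False
    have lt: "card (R \<inter> R') < j - 1" by (rule card_inter_less[OF R R' False])
    show ?thesis
    proof (cases "jadj (j-1) R R'")
      case True
      then have "card (R \<union> R') = j" using cu by (simp add: jadj_def)
      then show ?thesis unfolding eq using card_supsets[OF sub, of j] True False j by simp
    next
      case False2: False
      then have big: "card (R \<union> R') > j" using cu lt by (auto simp: jadj_def)
      have "{S \<in> johnson_vertices p j. R \<union> R' \<subseteq> S} = {}"
      proof (rule ccontr)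
        assume "{S \<in> johnson_vertices p j. R \<union> R' \<subseteq> S} \<noteq> {}"
        then obtain S where S: "S \<in> johnson_vertices p j" "R \<union> R' \<subseteq> S" by auto
        then have "card (R \<union> R') \<le> card S" using JV_fin_el card_mono by blast
        with S big show False by (simp add: JV_mem)
      qed
      then show ?thesis unfolding eq using False False2 by simp
    qed
  qed
qed



definition up :: "nat \<Rightarrow> nat \<Rightarrow> (nat set \<Rightarrow> real) \<Rightarrow> nat set \<Rightarrow> real" where
  "up p j v R = (\<Sum>S\<in>johnson_vertices p j. if R \<subseteq> S then v S else 0)"
definition down :: "nat \<Rightarrow> nat \<Rightarrow> (nat set \<Rightarrow> real) \<Rightarrow> nat set \<Rightarrow> real" where
  "down p j u S = (\<Sum>R\<in>johnson_vertices p (j-1). if R \<subseteq> S then u R else 0)"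
definition Qf :: "nat \<Rightarrow> nat \<Rightarrow> (nat set \<Rightarrow> real) \<Rightarrow> real" where
  "Qf p j v = (\<Sum>S\<in>johnson_vertices p j. \<Sum>T\<in>johnson_vertices p j. if jadj j S T then v S * v T else 0)"
definition sq :: "nat \<Rightarrow> nat \<Rightarrow> (nat set \<Rightarrow> real) \<Rightarrow> real" where
  "sq p j v = (\<Sum>S\<in>johnson_vertices p j. (v S)^2)"

lemma sq_nonneg: "sq p j v \<ge> 0"
  unfolding sq_def by (intro sum_nonneg) auto

lemma square_sum: "(\<Sum>x\<in>A. f x)^2 = (\<Sum>x\<in>A. \<Sum>y\<in>A. f x * f y)" for f :: "'a \<Rightarrow> real"
  by (simp add: power2_eq_square sum_product)

lemma diag_split:
  fixes v :: "nat set \<Rightarrow> real"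
  assumes S: "S \<in> johnson_vertices p j" and c: "\<And>T. T \<in> johnson_vertices p j \<Longrightarrow> c T = (if S = T then a else if jadj j S T then 1 else 0)"
  shows "(\<Sum>T\<in>johnson_vertices p j. v S * v T * c T) = a * (v S)^2 + (\<Sum>T\<in>johnson_vertices p j. if jadj j S T then v S * v T else 0)"
proof -
  have "(\<Sum>T\<in>johnson_vertices p j. v S * v T * c T) = (\<Sum>T\<in>johnson_vertices p j. (if S = T then a * (v S)^2 else 0) + (if jadj j S T then v S * v T else 0))"
  proof (rule sum.cong[OF refl])
    fix T assume T: "T \<in> johnson_vertices p j"
    show "v S * v T * c T = (if S = T then a * (v S)^2 else 0) + (if jadj j S T then v S * v T else 0)"
    proof (cases "S = T")
      case True
      then show ?thesis using jadj_irrefl[OF S] c[OF T] by (simp add: power2_eq_square algebra_simps)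
    next
      case False
      then show ?thesis using c[OF T] by (cases "jadj j S T") simp_all
    qed
  qed
  also have "\<dots> = a * (v S)^2 + (\<Sum>T\<in>johnson_vertices p j. if jadj j S T then v S * v T else 0)"
    using S by (simp add: sum.distrib)
  finally show ?thesis .
qed

lemma count_sub_real:
  assumes "S \<in> johnson_vertices p j" "T \<in> johnson_vertices p j" "j \<ge> 1"
  shows "real (card {R \<in> johnson_vertices p (j-1). R \<subseteq> S \<and> R \<subseteq> T}) = (if S = T then real j else if jadj j S T then 1 else 0)"
  by (subst count_sub[OF assms]) simp

lemma count_sup_real:
  assumes "R \<in> johnson_vertices p (j-1)" "R' \<in> johnson_vertices p (j-1)" "j \<ge> 1" "j \<le> p"
  shows "real (card {S \<in> johnson_vertices p j. R \<subseteq> S \<and> R' \<subseteq> S}) = (if R = R' then real p + 1 - real j else if jadj (j-1) R R' then 1 else 0)"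
  by (subst count_sup[OF assms]) (use assms in \<open>simp add: of_nat_diff\<close>)

lemma ident1:
  assumes j: "j \<ge> 1"
  shows "sq p (j-1) (up p j v) = j * sq p j v + Qf p j v"
proof -
  let ?V = "johnson_vertices p j" and ?W = "johnson_vertices p (j-1)"
  have "sq p (j-1) (up p j v) = (\<Sum>R\<in>?W. \<Sum>S\<in>?V. \<Sum>T\<in>?V. if R \<subseteq> S \<and> R \<subseteq> T then v S * v T else 0)"
    unfolding sq_def up_def square_sum by (intro sum.cong refl) auto
  also have "\<dots> = (\<Sum>S\<in>?V. \<Sum>T\<in>?V. \<Sum>R\<in>?W. if R \<subseteq> S \<and> R \<subseteq> T then v S * v T else 0)"
    by (subst sum.swap, subst (2) sum.swap, rule refl)
  also have "\<dots> = (\<Sum>S\<in>?V. \<Sum>T\<in>?V. v S * v T * real (card {R\<in>?W. R \<subseteq> S \<and> R \<subseteq> T}))"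
    by (simp add: sum_if_const)
  also have "\<dots> = (\<Sum>S\<in>?V. j * (v S)^2 + (\<Sum>T\<in>?V. if jadj j S T then v S * v T else 0))"
    by (intro sum.cong refl diag_split count_sub_real j)
  also have "\<dots> = j * sq p j v + Qf p j v"
    unfolding sq_def Qf_def by (simp add: sum.distrib sum_distrib_left)
  finally show ?thesis .
qed

lemma diag_split2:
  fixes u :: "nat set \<Rightarrow> real"
  assumes S: "S \<in> johnson_vertices p i" and c: "\<And>T. T \<in> johnson_vertices p i \<Longrightarrow> c T = (if S = T then a else if jadj i S T then 1 else 0)"
  shows "(\<Sum>T\<in>johnson_vertices p i. u S * u T * c T) = a * (u S)^2 + (\<Sum>T\<in>johnson_vertices p i. if jadj i S T then u S * u T else 0)"
  by (rule diag_split[OF S c])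

lemma ident2:
  assumes j: "j \<ge> 1" "j \<le> p"
  shows "sq p j (down p j u) = (real p + 1 - real j) * sq p (j-1) u + Qf p (j-1) u"
proof -
  let ?V = "johnson_vertices p j" and ?W = "johnson_vertices p (j-1)"
  have "sq p j (down p j u) = (\<Sum>S\<in>?V. \<Sum>R\<in>?W. \<Sum>R'\<in>?W. if R \<subseteq> S \<and> R' \<subseteq> S then u R * u R' else 0)"
    unfolding sq_def down_def square_sum by (intro sum.cong refl) auto
  also have "\<dots> = (\<Sum>R\<in>?W. \<Sum>R'\<in>?W. \<Sum>S\<in>?V. if R \<subseteq> S \<and> R' \<subseteq> S then u R * u R' else 0)"
    by (subst sum.swap, subst (2) sum.swap, rule refl)
  also have "\<dots> = (\<Sum>R\<in>?W. \<Sum>R'\<in>?W. u R * u R' * real (card {S\<in>?V. R \<subseteq> S \<and> R' \<subseteq> S}))"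
    by (simp add: sum_if_const)
  also have "\<dots> = (\<Sum>R\<in>?W. (real p + 1 - real j) * (u R)^2 + (\<Sum>R'\<in>?W. if jadj (j-1) R R' then u R * u R' else 0))"
    by (intro sum.cong refl diag_split2 count_sup_real j)
  also have "\<dots> = (real p + 1 - real j) * sq p (j-1) u + Qf p (j-1) u"
    unfolding sq_def Qf_def by (simp add: sum.distrib sum_distrib_left)
  finally show ?thesis .
qed

lemma ident3:
  "(\<Sum>S\<in>johnson_vertices p j. v S * down p j u S) = (\<Sum>R\<in>johnson_vertices p (j-1). u R * up p j v R)"
  unfolding down_def up_def sum_distrib_left
  by (subst sum.swap) (intro sum.cong refl, auto)

lemma sum_up:
  assumes j: "j \<ge> 1"
  shows "(\<Sum>R\<in>johnson_vertices p (j-1). up p j v R) = j * (\<Sum>S\<in>johnson_vertices p j. v S)"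
proof -
  have "(\<Sum>R\<in>johnson_vertices p (j-1). up p j v R) = (\<Sum>S\<in>johnson_vertices p j. \<Sum>R\<in>johnson_vertices p (j-1). if R \<subseteq> S then v S else 0)"
    unfolding up_def by (rule sum.swap)
  also have "\<dots> = (\<Sum>S\<in>johnson_vertices p j. v S * real (card {R\<in>johnson_vertices p (j-1). R \<subseteq> S \<and> R \<subseteq> S}))"
    by (simp add: sum_if_const)
  also have "\<dots> = (\<Sum>S\<in>johnson_vertices p j. j * v S)"
  proof (intro sum.cong refl)
    fix S assume S: "S \<in> johnson_vertices p j"
    show "v S * real (card {R\<in>johnson_vertices p (j-1). R \<subseteq> S \<and> R \<subseteq> S}) = j * v S"
      using count_sub_real[OF S S j] by simp
  qed
  finally show ?thesis by (simp add: sum_distrib_left)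
qed



lemma JV_0: "johnson_vertices p 0 = {{}}"
proof -
  have "S = {}" if "S \<subseteq> {0..<p}" "card S = 0" for S
    using that finite_subset by fastforce
  then show ?thesis by (auto simp: johnson_vertices_def)
qed

lemma quad_bound:
  "j \<le> p \<Longrightarrow> (\<Sum>S\<in>johnson_vertices p j. v S) = 0 \<Longrightarrow>
    Qf p j v \<le> (real j * (real p - real j) - real p) * sq p j v"
proof (induction j arbitrary: v)
  case 0
  then have "v {} = 0" by (simp add: JV_0)
  then show ?case by (simp add: JV_0 Qf_def sq_def jadj_def)
next
  case (Suc j)
  define J where "J = Suc j"
  have J1: "J \<ge> 1" and Jp: "J \<le> p" using Suc.prems unfolding J_def by auto
  define u where "u = up p J v"
  have su: "(\<Sum>R\<in>johnson_vertices p j. u R) = 0"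
    using sum_up[OF J1, of p v] Suc.prems unfolding u_def J_def by simp
  have IH: "Qf p j u \<le> (real j * (real p - real j) - real p) * sq p j u"
    using Suc.IH[OF _ su] Suc.prems by simp
  define X where "X = sq p j u"
  define w where "w = down p J u"
  define C where "C = real j * (real p - real j - 1)"
  have C0: "C \<ge> 0" unfolding C_def using Suc.prems by simp
  have I1: "X = J * sq p J v + Qf p J v"
    unfolding X_def u_def using ident1[OF J1, of p v] unfolding J_def by simp
  have I2: "sq p J w = (real p - real j) * X + Qf p j u"
    unfolding w_def X_def using ident2[OF J1 Jp, of u] unfolding J_def by simp
  have Wbound: "sq p J w \<le> C * X"
    using I2 IH unfolding C_def X_def by (simp add: algebra_simps)
  have I3: "X = (\<Sum>S\<in>johnson_vertices p J. v S * w S)"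
    unfolding w_def X_def sq_def using ident3[where p=p and j=J and v=v and u=u] unfolding J_def u_def
    by (simp add: power2_eq_square)
  have X0: "X \<ge> 0" unfolding X_def by (rule sq_nonneg)
  have key: "X \<le> C * sq p J v"
  proof (cases "C = 0")
    case True
    then have "sq p J w \<le> 0" using Wbound by simp
    then have "sq p J w = 0" using sq_nonneg[of p J w] by simp
    then have "\<forall>S\<in>johnson_vertices p J. (w S)^2 = 0"
      unfolding sq_def by (subst (asm) sum_nonneg_eq_0_iff) auto
    then have "\<forall>S\<in>johnson_vertices p J. w S = 0" by simp
    then have "X = 0" using I3 by simp
    then show ?thesis using True by simp
  next
    case False
    then have Cp: "C > 0" using C0 by simp
    have "0 \<le> (\<Sum>S\<in>johnson_vertices p J. (C * v S - w S)^2)" by (intro sum_nonneg) auto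
    also have "\<dots> = C^2 * sq p J v - 2 * C * X + sq p J w"
      unfolding I3 sq_def by (simp add: power2_diff sum.distrib sum_subtractf sum_distrib_left
          power_mult_distrib algebra_simps)
    finally have "2 * C * X \<le> C^2 * sq p J v + C * X" using Wbound by simp
    then have "C * X \<le> C * (C * sq p J v)" by (simp add: power2_eq_square algebra_simps)
    then show ?thesis using Cp by simp
  qed
  have "Qf p J v \<le> (C - J) * sq p J v" using key I1 by (simp add: algebra_simps)
  also have "C - J = real J * (real p - real J) - real p" unfolding C_def J_def by (simp add: algebra_simps)
  finally show ?case unfolding J_def .
qed



lemma mult_vec_sum_gen: "M \<in> carrier_mat n n \<Longrightarrow> i < n \<Longrightarrow> v \<in> carrier_vec n \<Longrightarrow> (M *\<^sub>v v) $ i = (\<Sum>j<n. M$$(i,j) * v$j)"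
  by (auto simp: scalar_prod_def lessThan_atLeast0)

lemma sum_shift1: "(\<Sum>j<Suc m. f j) = f 0 + (\<Sum>b<m. f (Suc b))"
  by (rule sum.lessThan_Suc_shift)

context
  fixes A :: "real mat" and N :: nat and d \<theta> :: real
  assumes A: "A \<in> carrier_mat N N" and N: "N > 0"
   and sym: "\<And>i j. i<N \<Longrightarrow> j<N \<Longrightarrow> A$$(i,j) = A$$(j,i)"
   and rows: "\<And>i. i<N \<Longrightarrow> (\<Sum>j<N. A$$(i,j)) = d"
   and quad: "\<And>x. (\<Sum>i<N. x i) = 0 \<Longrightarrow> (\<Sum>i<N. \<Sum>j<N. A$$(i,j) * x i * x j) \<le> \<theta> * (\<Sum>i<N. (x i)^2)"
   and thd: "\<theta> < d"
begin

lemma colsum: "(\<Sum>i<N. \<Sum>j<N. A$$(i,j) * x j) = d * (\<Sum>j<N. x j)"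
proof -
  have "(\<Sum>i<N. \<Sum>j<N. A$$(i,j) * x j) = (\<Sum>j<N. x j * (\<Sum>i<N. A$$(j,i)))"
    by (subst sum.swap) (simp add: sum_distrib_left sym mult.commute)
  also have "\<dots> = (\<Sum>j<N. x j * d)" by (simp add: rows)
  finally show ?thesis by (simp add: sum_distrib_left mult.commute)
qed

lemma quad_eig:
  assumes eq: "\<And>i. i<N \<Longrightarrow> (\<Sum>j<N. A$$(i,j) * x j) = lam * x i"
  shows "(\<Sum>i<N. \<Sum>j<N. A$$(i,j) * x i * x j) = lam * (\<Sum>i<N. (x i)^2)"
proof -
  have "(\<Sum>i<N. \<Sum>j<N. A$$(i,j) * x i * x j) = (\<Sum>i<N. x i * (\<Sum>j<N. A$$(i,j) * x j))"
    by (simp add: sum_distrib_left algebra_simps)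
  also have "\<dots> = (\<Sum>i<N. lam * (x i)^2)"
  proof (intro sum.cong refl)
    fix i assume "i \<in> {..<N}"
    then show "x i * (\<Sum>j<N. A$$(i,j) * x j) = lam * (x i)^2" using eq[of i] by (simp add: power2_eq_square)
  qed
  finally show ?thesis by (simp add: sum_distrib_left)
qed

lemma eig_bound:
  assumes eq: "\<And>i. i<N \<Longrightarrow> (\<Sum>j<N. A$$(i,j) * x j) = lam * x i"
    and nz: "i0 < N" "x i0 \<noteq> 0"
  shows "lam = d \<or> lam \<le> \<theta>"
proof (cases "lam = d")
  case False
  have "d * (\<Sum>j<N. x j) = lam * (\<Sum>j<N. x j)"
    using colsum[of x] by (simp add: eq sum_distrib_left)
  then have s0: "(\<Sum>j<N. x j) = 0" using False by simp
  have pos: "(\<Sum>i<N. (x i)^2) > 0"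
  proof -
    have "(x i0)^2 \<le> (\<Sum>i<N. (x i)^2)" using nz by (intro member_le_sum) auto
    moreover have "(x i0)^2 > 0" using nz by simp
    ultimately show ?thesis by linarith
  qed
  have "lam * (\<Sum>i<N. (x i)^2) \<le> \<theta> * (\<Sum>i<N. (x i)^2)"
    using quad[OF s0] quad_eig[OF eq] by simp
  then show ?thesis using pos by simp
qed simp

lemma eig_d_const:
  assumes eq: "\<And>i. i<N \<Longrightarrow> (\<Sum>j<N. A$$(i,j) * x j) = d * x i"
  shows "\<And>i. i < N \<Longrightarrow> x i = x 0"
proof -
  define c where "c = (\<Sum>j<N. x j) / N"
  define y where "y i = x i - c" for i
  have eqy: "(\<Sum>j<N. A$$(i,j) * y j) = d * y i" if i: "i < N" for i
  proof -
    have "(\<Sum>j<N. A$$(i,j) * y j) = (\<Sum>j<N. A$$(i,j) * x j) - c * (\<Sum>j<N. A$$(i,j))"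
      unfolding y_def by (simp add: algebra_simps sum_subtractf sum_distrib_left)
    also have "\<dots> = d * y i" using eq[OF i] rows[OF i] unfolding y_def by (simp add: algebra_simps)
    finally show ?thesis .
  qed
  have sy: "(\<Sum>j<N. y j) = 0" unfolding y_def c_def using N by (simp add: sum_subtractf)
  have "d * (\<Sum>i<N. (y i)^2) \<le> \<theta> * (\<Sum>i<N. (y i)^2)"
    using quad[OF sy] quad_eig[OF eqy] by simp
  then have "(d - \<theta>) * (\<Sum>i<N. (y i)^2) \<le> 0" by (simp add: algebra_simps)
  then have "(\<Sum>i<N. (y i)^2) \<le> 0" using thd by (simp add: mult_le_0_iff)
  moreover have "(\<Sum>i<N. (y i)^2) \<ge> 0" by (intro sum_nonneg) auto
  ultimately have "(\<Sum>i<N. (y i)^2) = 0" by linarith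
  then have "\<forall>i\<in>{..<N}. (y i)^2 = 0" by (subst (asm) sum_nonneg_eq_0_iff) auto
  then have "\<And>i. i < N \<Longrightarrow> x i = c" unfolding y_def by auto
  then show "\<And>i. i < N \<Longrightarrow> x i = x 0" using N by metis
qed

lemma mult_vec_sum: "i < N \<Longrightarrow> v \<in> carrier_vec N \<Longrightarrow> (A *\<^sub>v v) $ i = (\<Sum>j<N. A$$(i,j) * v$j)"
  using A by (auto simp: scalar_prod_def lessThan_atLeast0)

lemma root_bound: assumes "poly (char_poly A) lam = 0" shows "lam = d \<or> lam \<le> \<theta>"
proof -
  from assms eigenvalue_root_char_poly[OF A] obtain v where ev: "eigenvector A v lam"
    unfolding eigenvalue_def by auto
  then have v: "v \<in> carrier_vec N" "v \<noteq> 0\<^sub>v N" "A *\<^sub>v v = lam \<cdot>\<^sub>v v"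
    unfolding eigenvector_def using A by auto
  then obtain i0 where i0: "i0 < N" "v $ i0 \<noteq> 0" by (metis carrier_vecD eq_vecI index_zero_vec)
  show ?thesis
  proof (rule eig_bound[of "\<lambda>i. v $ i"])
    fix i assume "i < N"
    then show "(\<Sum>j<N. A $$ (i, j) * v $ j) = lam * v $ i"
      using v mult_vec_sum[of i v] by (metis carrier_vecD index_smult_vec(1))
  qed (use i0 in auto)
qed

lemma order_le1: "order d (char_poly A) \<le> 1"
proof -
  define P where "P = mat N N (\<lambda>(i,j). (if i = j then 1 else 0) + (if j = 0 \<and> i \<noteq> 0 then 1 else 0) :: real)"
  define Q where "Q = mat N N (\<lambda>(i,j). (if i = j then 1 else 0) - (if j = 0 \<and> i \<noteq> 0 then 1 else 0) :: real)"
  define C where "C = mat N N (\<lambda>(i,j). if j = 0 then (if i = 0 then d else 0) else if i = 0 then A$$(0,j) else A$$(i,j) - A$$(0,j))"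
  define B where "B = mat (N-1) (N-1) (\<lambda>(a,b). A$$(a+1,b+1) - A$$(0,b+1))"
  define C1 where "C1 = mat 1 1 (\<lambda>_. d)"
  define C2 where "C2 = mat 1 (N-1) (\<lambda>(_,b). A$$(0,b+1))"
  have Pc: "P \<in> carrier_mat N N" and Qc: "Q \<in> carrier_mat N N" and Cc: "C \<in> carrier_mat N N"
    and Bc: "B \<in> carrier_mat (N-1) (N-1)" and C1c: "C1 \<in> carrier_mat 1 1" and C2c: "C2 \<in> carrier_mat 1 (N-1)"
    unfolding P_def Q_def C_def B_def C1_def C2_def by auto
  have Pleft: "(\<Sum>k\<in>{0..<N}. P$$(i,k) * g k) = g i + (if i \<noteq> 0 then g 0 else 0)" if "i < N" for i g
  proof -
    have "(\<Sum>k\<in>{0..<N}. P$$(i,k) * g k) = (\<Sum>k\<in>{0..<N}. (if i = k then g k else 0) + (if k = 0 \<and> i \<noteq> 0 then g k else 0))"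
      by (intro sum.cong refl) (auto simp: P_def that)
    also have "\<dots> = g i + (if i \<noteq> 0 then g 0 else 0)" using that N by (simp add: sum.distrib)
    finally show ?thesis .
  qed
  have Qleft: "(\<Sum>k\<in>{0..<N}. Q$$(i,k) * g k) = g i - (if i \<noteq> 0 then g 0 else 0)" if "i < N" for i g
  proof -
    have "(\<Sum>k\<in>{0..<N}. Q$$(i,k) * g k) = (\<Sum>k\<in>{0..<N}. (if i = k then g k else 0) - (if k = 0 \<and> i \<noteq> 0 then g k else 0))"
      by (intro sum.cong refl) (auto simp: Q_def that)
    also have "\<dots> = g i - (if i \<noteq> 0 then g 0 else 0)" using that N by (simp add: sum_subtractf)
    finally show ?thesis .
  qed
  have Pright: "(\<Sum>k\<in>{0..<N}. g k * P$$(k,j)) = (if j = 0 then (\<Sum>k\<in>{0..<N}. g k) else g j)" if "j < N" for j g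
  proof (cases "j = 0")
    case True
    have "(\<Sum>k\<in>{0..<N}. g k * P$$(k,j)) = (\<Sum>k\<in>{0..<N}. g k)"
      by (intro sum.cong refl) (simp add: P_def True)
    then show ?thesis using True by simp
  next
    case False
    have "(\<Sum>k\<in>{0..<N}. g k * P$$(k,j)) = (\<Sum>k\<in>{0..<N}. if k = j then g k else 0)"
      by (intro sum.cong refl) (auto simp: P_def that False)
    then show ?thesis using False that by simp
  qed
  have PQ: "P * Q = 1\<^sub>m N"
  proof (rule eq_matI)
    fix i j assume ij: "i < dim_row (1\<^sub>m N)" "j < dim_col (1\<^sub>m N)"
    then have "(P * Q) $$ (i,j) = (\<Sum>k\<in>{0..<N}. P$$(i,k) * Q$$(k,j))"
      using Pc Qc by (simp add: scalar_prod_def)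
    also have "\<dots> = Q$$(i,j) + (if i \<noteq> 0 then Q$$(0,j) else 0)" using ij by (intro Pleft) simp
    also have "\<dots> = 1\<^sub>m N $$ (i,j)" using ij N by (auto simp: Q_def)
    finally show "(P * Q) $$ (i,j) = 1\<^sub>m N $$ (i,j)" .
  qed (use Pc Qc in auto)
  have QP: "Q * P = 1\<^sub>m N"
  proof (rule eq_matI)
    fix i j assume ij: "i < dim_row (1\<^sub>m N)" "j < dim_col (1\<^sub>m N)"
    then have "(Q * P) $$ (i,j) = (\<Sum>k\<in>{0..<N}. Q$$(i,k) * P$$(k,j))"
      using Pc Qc by (simp add: scalar_prod_def)
    also have "\<dots> = P$$(i,j) - (if i \<noteq> 0 then P$$(0,j) else 0)" using ij by (intro Qleft) simp
    also have "\<dots> = 1\<^sub>m N $$ (i,j)" using ij N by (auto simp: P_def)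
    finally show "(Q * P) $$ (i,j) = 1\<^sub>m N $$ (i,j)" .
  qed (use Pc Qc in auto)
  have AP: "A * P = P * C"
  proof (rule eq_matI)
    fix i j assume ij: "i < dim_row (P * C)" "j < dim_col (P * C)"
    then have ij': "i < N" "j < N" using Pc Cc by auto
    have "(A * P) $$ (i,j) = (\<Sum>k\<in>{0..<N}. A$$(i,k) * P$$(k,j))"
      using ij' A Pc by (simp add: scalar_prod_def)
    also have "\<dots> = (if j = 0 then d else A$$(i,j))"
      using Pright[OF ij'(2), of "\<lambda>k. A$$(i,k)"] rows[OF ij'(1)] by (simp add: lessThan_atLeast0)
    also have "\<dots> = C$$(i,j) + (if i \<noteq> 0 then C$$(0,j) else 0)" using ij' N by (auto simp: C_def)
    also have "\<dots> = (\<Sum>k\<in>{0..<N}. P$$(i,k) * C$$(k,j))" using ij' by (intro Pleft[symmetric])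
    also have "\<dots> = (P * C) $$ (i,j)" using ij' Pc Cc by (simp add: scalar_prod_def)
    finally show "(A * P) $$ (i,j) = (P * C) $$ (i,j)" .
  qed (use A Pc Cc in auto)
  have AeqPCQ: "A = P * C * Q"
  proof -
    have "A = A * (P * Q)" using A PQ by simp
    also have "\<dots> = (A * P) * Q" using A Pc Qc by (simp add: assoc_mult_mat)
    also have "\<dots> = P * C * Q" unfolding AP ..
    finally show ?thesis .
  qed
  have sim: "similar_mat A C"
    unfolding similar_mat_def similar_mat_wit_def Let_def
    using A Pc Qc Cc PQ QP AeqPCQ by (intro exI[of _ P] exI[of _ Q]) auto
  have Cblock: "C = four_block_mat C1 C2 (0\<^sub>m (N-1) 1) B"
  proof (rule eq_matI)
    fix i j assume ij: "i < dim_row (four_block_mat C1 C2 (0\<^sub>m (N-1) 1) B)" "j < dim_col (four_block_mat C1 C2 (0\<^sub>m (N-1) 1) B)"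
    then have ij': "i < N" "j < N" using C1c Bc N by auto
    show "C $$ (i,j) = four_block_mat C1 C2 (0\<^sub>m (N-1) 1) B $$ (i,j)"
      using ij' C1c C2c Bc N by (auto simp: C_def C1_def C2_def B_def)
  qed (use C1c Bc N Cc in auto)
  have cpC1: "char_poly C1 = [:-d, 1:]"
  proof -
    have "upper_triangular C1" unfolding C1_def upper_triangular_def by auto
    from char_poly_upper_triangular[OF C1c this] show ?thesis
      unfolding C1_def by (simp add: diag_mat_def)
  qed
  have cpA: "char_poly A = [:-d, 1:] * char_poly B"
    using char_poly_similar[OF sim] Cblock char_poly_four_block_zeros_col[OF C1c C2c Bc] cpC1 by simp
  have Bnot: "poly (char_poly B) d \<noteq> 0"
  proof
    assume "poly (char_poly B) d = 0"
    with eigenvalue_root_char_poly[OF Bc] obtain w where ev: "eigenvector B w d"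
      unfolding eigenvalue_def by auto
    then have w: "w \<in> carrier_vec (N-1)" "w \<noteq> 0\<^sub>v (N-1)" "B *\<^sub>v w = d \<cdot>\<^sub>v w"
      unfolding eigenvector_def using Bc by auto
    have Bw: "(\<Sum>b<N-1. B$$(a,b) * w$b) = d * w$a" if "a < N-1" for a
      using mult_vec_sum_gen[OF Bc that w(1)] w(3) that w(1) by simp
    define z where "z i = (if i = 0 then 0 else w$(i-1))" for i
    define s where "s = (\<Sum>j<N. A$$(0,j) * z j)"
    have Nm: "N = Suc (N-1)" using N by simp
    have zeq: "(\<Sum>j<N. A$$(i,j) * z j) = d * z i + s" if i: "i < N" for i
    proof (cases "i = 0")
      case True then show ?thesis by (simp add: s_def z_def)
    next
      case False
      have "(\<Sum>j<N. A$$(i,j) * z j) - s = (\<Sum>j<N. (A$$(i,j) - A$$(0,j)) * z j)"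
        unfolding s_def by (simp add: sum_subtractf algebra_simps)
      also have "\<dots> = (\<Sum>b<N-1. (A$$(i,Suc b) - A$$(0,Suc b)) * z (Suc b))"
        by (subst Nm, subst sum_shift1) (simp add: z_def)
      also have "\<dots> = (\<Sum>b<N-1. B$$(i-1,b) * w$b)"
        using i False by (intro sum.cong refl) (auto simp: B_def z_def)
      also have "\<dots> = d * z i" using Bw[of "i-1"] i False by (simp add: z_def)
      finally show ?thesis by simp
    qed
    have "d * (\<Sum>j<N. z j) = (\<Sum>i<N. d * z i + s)"
      using colsum[of z] zeq by simp
    also have "\<dots> = d * (\<Sum>j<N. z j) + N * s" by (simp add: sum.distrib sum_distrib_left)
    finally have "s = 0" using N by simp
    then have zeq0: "\<And>i. i<N \<Longrightarrow> (\<Sum>j<N. A$$(i,j) * z j) = d * z i" using zeq by simp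
    have zc: "\<And>i. i<N \<Longrightarrow> z i = z 0" by (rule eig_d_const[OF zeq0])
    have wb: "w$b = 0" if "b < N-1" for b using zc[of "Suc b"] that by (simp add: z_def)
    have "w = 0\<^sub>v (N-1)" using w(1) wb by (intro eq_vecI) auto
    with w(2) show False by simp
  qed
  have cB: "char_poly B \<noteq> 0"
    using degree_monic_char_poly[OF Bc] by auto
  have l0: "[:-d, 1:] \<noteq> (0::real poly)" by simp
  have nz: "[:-d, 1:] * char_poly B \<noteq> 0" by (rule no_zero_divisors[OF l0 cB])
  have "order d (char_poly A) = order d [:-d, 1:] + order d (char_poly B)"
    unfolding cpA by (rule order_mult[OF nz])
  also have "order d (char_poly B) = 0" using Bnot by (simp add: order_root)
  finally show ?thesis by (simp add: order_power_n_n[of d 1, simplified])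
qed

end


lemma johnson_adj_jadj: "k \<ge> 1 \<Longrightarrow> johnson_adj k S T = jadj k S T"
  unfolding johnson_adj_def jadj_def by auto

lemma degree_real:
  assumes S: "S \<in> johnson_vertices p k" and k: "k \<ge> 1" "k \<le> p"
  shows "real (card {T \<in> johnson_vertices p k. jadj k S T}) = real k * (real p - real k)"
proof -
  let ?V = "johnson_vertices p k" and ?W = "johnson_vertices p (k-1)"
  have "(\<Sum>T\<in>?V. real (card {R\<in>?W. R \<subseteq> S \<and> R \<subseteq> T})) = (\<Sum>T\<in>?V. (if S = T then real k else 0) + (if jadj k S T then 1 else 0))"
  proof (intro sum.cong refl)
    fix T assume T: "T \<in> ?V"
    show "real (card {R\<in>?W. R \<subseteq> S \<and> R \<subseteq> T}) = (if S = T then real k else 0) + (if jadj k S T then 1 else 0)"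
      using count_sub_real[OF S T k(1)] jadj_irrefl[OF S] by auto
  qed
  also have "\<dots> = real k + real (card {T \<in> ?V. jadj k S T})"
    using S by (simp add: sum.distrib sum_if_const)
  finally have e1: "(\<Sum>T\<in>?V. real (card {R\<in>?W. R \<subseteq> S \<and> R \<subseteq> T})) = real k + real (card {T \<in> ?V. jadj k S T})" .
  have "(\<Sum>T\<in>?V. real (card {R\<in>?W. R \<subseteq> S \<and> R \<subseteq> T})) = (\<Sum>T\<in>?V. \<Sum>R\<in>?W. if R \<subseteq> S \<and> R \<subseteq> T then 1 else 0)"
    by (simp add: sum_if_const)
  also have "\<dots> = (\<Sum>R\<in>?W. \<Sum>T\<in>?V. if R \<subseteq> S \<and> R \<subseteq> T then 1 else 0)" by (rule sum.swap)
  also have "\<dots> = (\<Sum>R\<in>?W. if R \<subseteq> S then real (card {T\<in>?V. R \<subseteq> T \<and> R \<subseteq> T}) else 0)"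
    by (intro sum.cong refl) (auto simp: sum_if_const)
  also have "\<dots> = (\<Sum>R\<in>?W. if R \<subseteq> S then real p + 1 - real k else 0)"
  proof (intro sum.cong refl)
    fix R assume R: "R \<in> ?W"
    show "(if R \<subseteq> S then real (card {T\<in>?V. R \<subseteq> T \<and> R \<subseteq> T}) else 0) = (if R \<subseteq> S then real p + 1 - real k else 0)"
      using count_sup_real[OF R R k] by simp
  qed
  also have "\<dots> = (real p + 1 - real k) * real (card {R\<in>?W. R \<subseteq> S \<and> R \<subseteq> S})"
    by (simp add: sum_if_const)
  also have "\<dots> = (real p + 1 - real k) * real k"
    using count_sub_real[OF S S k(1)] by simp
  finally show ?thesis using e1 by (simp add: algebra_simps)
qed



lemma pos_prefix:
  fixes mu :: "real list"
  assumes sorted: "\<And>i j. i \<le> j \<Longrightarrow> j < length mu \<Longrightarrow> mu!j \<le> mu!i"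
    and i: "i < length (filter (\<lambda>x. x > 0) mu)"
  shows "mu!i > 0"
proof (rule ccontr)
  assume "\<not> mu!i > 0"
  then have np: "mu!i \<le> 0" by simp
  have "{j. j < length mu \<and> mu!j > 0} \<subseteq> {..<i}"
  proof
    fix j assume j: "j \<in> {j. j < length mu \<and> mu!j > 0}"
    show "j \<in> {..<i}"
    proof (rule ccontr)
      assume "j \<notin> {..<i}"
      then have "i \<le> j" by simp
      then have "mu!j \<le> mu!i" using sorted j by simp
      with np j show False by simp
    qed
  qed
  then have "card {j. j < length mu \<and> mu!j > 0} \<le> i"
    using card_mono[of "{..<i}"] by fastforce
  moreover have "length (filter (\<lambda>x. x > 0) mu) = card {j. j < length mu \<and> mu!j > 0}"
    by (rule length_filter_conv_card)
  ultimately show False using i by simp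
qed

lemma list_bound:
  fixes mu :: "real list" and d \<theta> :: real and l w :: nat
  assumes sorted: "\<And>i j. i \<le> j \<Longrightarrow> j < length mu \<Longrightarrow> mu!j \<le> mu!i"
    and vals: "\<And>x. x \<in> set mu \<Longrightarrow> x = d \<or> x \<le> \<theta>"
    and thd: "\<theta> < d"
    and cnt: "count (mset mu) d \<le> 1"
    and l: "l \<le> length (filter (\<lambda>x. x > 0) mu)" "l \<le> w" and w: "w \<ge> 1"
  shows "(\<Sum>i<l. (mu!i)^2) \<le> d^2 + (real w - 1) * \<theta>^2"
proof (cases "l = 0")
  case True
  have "0 \<le> d^2 + (real w - 1) * \<theta>^2" using w by (intro add_nonneg_nonneg mult_nonneg_nonneg) auto
  then show ?thesis using True by simp
next
  case False
  have lenl: "l \<le> length mu" using l(1) length_filter_le[of "\<lambda>x. x > 0" mu] by linarith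
  have posi: "mu!i > 0" if "i < l" for i using pos_prefix[OF sorted] l(1) that by simp
  have le_d: "mu!i \<le> d" if "i < length mu" for i
    using vals[of "mu!i"] that thd by auto
  have l0: "0 < length mu" using False lenl by linarith
  have m0: "(mu!0)^2 \<le> d^2"
    using posi[of 0] le_d[OF l0] False by (intro power_mono) auto
  have mi: "(mu!i)^2 \<le> \<theta>^2" if i: "1 \<le> i" "i < l" for i
  proof -
    have ne: "mu!i \<noteq> d"
    proof
      assume eq: "mu!i = d"
      have "mu!i \<le> mu!0" using sorted[of 0 i] i lenl by simp
      then have e0: "mu!0 = d" using eq le_d[OF l0] by simp
      have "{0, i} \<subseteq> {j. j < length mu \<and> mu!j = d}" using e0 eq i lenl by auto
      then have "card {0, i} \<le> card {j. j < length mu \<and> mu!j = d}"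
        by (intro card_mono) auto
      moreover have "card {0, i} = 2" using i by simp
      moreover have "count (mset mu) d = card {j. j < length mu \<and> mu!j = d}"
      proof -
        have "count (mset mu) d = length (filter ((=) d) mu)" by (simp add: count_mset count_list_eq_length_filter)
        also have "\<dots> = card {j. j < length mu \<and> d = mu!j}" by (rule length_filter_conv_card)
        also have "{j. j < length mu \<and> d = mu!j} = {j. j < length mu \<and> mu!j = d}" by auto
        finally show ?thesis .
      qed
      ultimately show False using cnt by simp
    qed
    then have "mu!i \<le> \<theta>" using vals[of "mu!i"] i lenl by auto
    then show ?thesis using posi[OF i(2)] by (intro power_mono) auto
  qed
  obtain l' where l': "l = Suc l'" using False by (cases l) auto
  have "(\<Sum>i<l. (mu!i)^2) = (mu!0)^2 + (\<Sum>b<l'. (mu!(Suc b))^2)"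
    unfolding l' by (rule sum.lessThan_Suc_shift)
  also have "(\<Sum>b<l'. (mu!(Suc b))^2) \<le> (\<Sum>b<l'. \<theta>^2)"
    by (intro sum_mono mi) (auto simp: l')
  also have "(\<Sum>b<l'. \<theta>^2) = real l' * \<theta>^2" by simp
  also have "real l' * \<theta>^2 \<le> (real w - 1) * \<theta>^2"
    using l(2) l' by (intro mult_right_mono) auto
  finally show ?thesis using m0 by simp
qed



lemma clique_lower:
  assumes k: "k \<ge> 1" "k \<le> p"
  shows "is_clique (johnson_vertices p k) (johnson_adj k) ((\<lambda>x. insert x {0..<k-1}) ` {k-1..<p})"
    and "card ((\<lambda>x. insert x {0..<k-1}) ` {k-1..<p}) = p - k + 1"
proof -
  let ?R = "{0..<k-1}"
  show "is_clique (johnson_vertices p k) (johnson_adj k) ((\<lambda>x. insert x ?R) ` {k-1..<p})"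
    unfolding is_clique_def
  proof (intro conjI ballI impI)
    show "(\<lambda>x. insert x ?R) ` {k-1..<p} \<subseteq> johnson_vertices p k"
      using k by (auto simp: JV_mem)
    fix X Y assume X: "X \<in> (\<lambda>x. insert x ?R) ` {k-1..<p}" and Y: "Y \<in> (\<lambda>x. insert x ?R) ` {k-1..<p}" and ne: "X \<noteq> Y"
    obtain x where x: "x \<in> {k-1..<p}" "X = insert x ?R" using X by blast
    obtain y where y: "y \<in> {k-1..<p}" "Y = insert y ?R" using Y by blast
    have "x \<noteq> y" using ne x(2) y(2) by metis
    then have "X \<inter> Y = ?R" using x y by auto
    then show "johnson_adj k X Y" by (simp add: johnson_adj_def)
  qed
  have "inj_on (\<lambda>x. insert x ?R) {k-1..<p}"
  proof (rule inj_onI)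
    fix x y assume x: "x \<in> {k-1..<p}" and "y \<in> {k-1..<p}" and e: "insert x ?R = insert y ?R"
    have "x \<in> insert y ?R" using e by blast
    then show "x = y" using x by auto
  qed
  then show "card ((\<lambda>x. insert x ?R) ` {k-1..<p}) = p - k + 1"
    using k by (simp add: card_image)
qed

lemma clique_upper:
  assumes k: "k \<ge> 1" "2 * k \<le> p" and C: "is_clique (johnson_vertices p k) (johnson_adj k) C"
  shows "card C \<le> p - k + 1"
proof (cases "card C \<le> 1")
  case True then show ?thesis by simp
next
  case False
  have CV: "C \<subseteq> johnson_vertices p k" and adj: "\<And>X Y. X \<in> C \<Longrightarrow> Y \<in> C \<Longrightarrow> X \<noteq> Y \<Longrightarrow> card (X \<inter> Y) = k - 1"
    using C unfolding is_clique_def johnson_adj_def by auto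
  have finC: "finite C" using CV finite_subset JV_finite by blast
  have "\<not> (\<forall>a\<in>C. \<forall>b\<in>C. a = b)" using False card_le_Suc0_iff_eq[OF finC] by simp
  then obtain S T where ST: "S \<in> C" "T \<in> C" "S \<noteq> T" by blast
  have S: "S \<in> johnson_vertices p k" and T: "T \<in> johnson_vertices p k" using ST CV by auto
  have fS: "finite S" and fT: "finite T" using S T JV_fin_el by auto
  define I where "I = S \<inter> T"
  define U where "U = S \<union> T"
  have cI: "card I = k - 1" unfolding I_def using adj ST by simp
  have cU: "card U = k + 1"
  proof -
    have "card U + card I = card S + card T" unfolding U_def I_def using card_Un_Int[OF fS fT] by simp
    then show ?thesis using cI S T k by (simp add: JV_mem)
  qed
  have fI: "finite I" unfolding I_def using fS by simp
  have fU: "finite U" unfolding U_def using fS fT by simp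
  have IS: "I \<subseteq> S" "I \<subseteq> T" unfolding I_def by auto
  have dich: "I \<subseteq> X \<or> X \<subseteq> U" if X: "X \<in> C" for X
  proof (cases "X = S \<or> X = T")
    case True then show ?thesis using IS by auto
  next
    case False
    have XV: "X \<in> johnson_vertices p k" using X CV by auto
    have fX: "finite X" using XV JV_fin_el by auto
    have xs: "card (X \<inter> S) = k - 1" and xt: "card (X \<inter> T) = k - 1" using adj X ST False by auto
    show ?thesis
    proof (cases "I \<subseteq> X")
      case True then show ?thesis by simp
    next
      case nI: False
      have "X \<inter> I \<subset> I" using nI by auto
      then have lt: "card (X \<inter> I) < k - 1" using psubset_card_mono[OF fI] cI by simp
      have "card (X \<inter> U) + card (X \<inter> I) = card (X \<inter> S) + card (X \<inter> T)"
        using card_Un_Int[of "X \<inter> S" "X \<inter> T"] fX unfolding U_def I_def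
        by (simp add: Int_Un_distrib Int_assoc Int_left_commute Int_commute inf.left_idem)
      then have "card (X \<inter> U) \<ge> k" using xs xt lt by linarith
      moreover have "card (X \<inter> U) \<le> card X" using fX by (intro card_mono) auto
      ultimately have "card (X \<inter> U) = card X" using XV by (simp add: JV_mem)
      then have "X \<inter> U = X" using fX by (intro card_subset_eq) auto
      then show ?thesis by auto
    qed
  qed
  show ?thesis
  proof (cases "\<forall>X\<in>C. I \<subseteq> X")
    case True
    have sing: "\<exists>x. X - I = {x}" if X: "X \<in> C" for X
    proof -
      have XV: "X \<in> johnson_vertices p k" using X CV by auto
      have "card (X - I) = 1" using True X XV cI k fI by (simp add: card_Diff_subset JV_mem)
      then show ?thesis by (rule card_1_singletonE) auto
    qed
    define f where "f X = the_elem (X - I)" for X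
    have fX: "X - I = {f X}" if XC: "X \<in> C" for X
    proof -
      obtain x where "X - I = {x}" using sing[OF XC] by blast
      then show ?thesis unfolding f_def by simp
    qed
    have inj: "inj_on f C"
    proof (rule inj_onI)
      fix X Y assume X: "X \<in> C" and Y: "Y \<in> C" and eq: "f X = f Y"
      have "X = I \<union> (X - I)" using True X by blast
      also have "\<dots> = I \<union> (Y - I)" using fX[OF X] fX[OF Y] eq by simp
      also have "\<dots> = Y" using True Y by blast
      finally show "X = Y" .
    qed
    have img: "f ` C \<subseteq> {0..<p} - I"
    proof
      fix x assume "x \<in> f ` C"
      then obtain X where X: "X \<in> C" "x = f X" by blast
      then have "x \<in> X - I" using fX[OF X(1)] by simp
      moreover have "X \<in> johnson_vertices p k" using X(1) CV by blast
      then have "X \<subseteq> {0..<p}" by (simp add: JV_mem)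
      ultimately show "x \<in> {0..<p} - I" by blast
    qed
    have "card C = card (f ` C)" using inj by (simp add: card_image)
    also have "\<dots> \<le> card ({0..<p} - I)" using img by (intro card_mono) auto
    also have "\<dots> = p - (k - 1)" using cI IS S by (subst card_Diff_subset) (auto simp: JV_mem fI)
    finally show ?thesis using k by simp
  next
    case False
    then obtain Y where Y: "Y \<in> C" "\<not> I \<subseteq> Y" by auto
    have YU: "Y \<subseteq> U" using dich[OF Y(1)] Y(2) by auto
    have allU: "X \<subseteq> U" if X: "X \<in> C" for X
    proof (rule ccontr)
      assume nU: "\<not> X \<subseteq> U"
      then have IX: "I \<subseteq> X" using dich[OF X] by auto
      have XY: "X \<noteq> Y" using nU YU by auto
      obtain y where y: "y \<in> I" "y \<notin> Y" using Y(2) by auto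
      obtain x where x: "x \<in> X" "x \<notin> U" using nU by auto
      have XV: "X \<in> johnson_vertices p k" using X CV by auto
      have fX: "finite X" using XV JV_fin_el by auto
      have "X = insert x I"
      proof -
        have "insert x I \<subseteq> X" using IX x by auto
        moreover have "card (insert x I) = k" using x cI fI k IS unfolding U_def by (auto simp: card_insert_if)
        ultimately show ?thesis using fX XV by (intro card_subset_eq[symmetric]) (auto simp: JV_mem)
      qed
      then have "X \<inter> Y \<subseteq> I - {y}" using x YU y by auto
      then have "card (X \<inter> Y) \<le> card (I - {y})" using fI by (intro card_mono) auto
      also have "\<dots> = k - 2" using y cI fI by simp
      finally have "card (X \<inter> Y) \<le> k - 2" .
      moreover have "card (X \<inter> Y) = k - 1" using adj X Y(1) XY by simp
      moreover have "card I > 0" using y(1) fI card_gt_0_iff by blast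
      then have "k \<ge> 2" using cI by linarith
      ultimately show False by linarith
    qed
    have "C \<subseteq> {X. X \<subseteq> U \<and> card X = k}" using allU CV by (auto simp: JV_mem)
    then have "card C \<le> card {X. X \<subseteq> U \<and> card X = k}" by (intro card_mono) (auto simp: fU)
    also have "\<dots> = (k + 1) choose k" using n_subsets[OF fU] cU by simp
    also have "\<dots> = k + 1" by (metis binomial_Suc_n Suc_eq_plus1)
    finally show ?thesis using k by simp
  qed
qed

lemma clique_number_johnson:
  assumes k: "k \<ge> 1" "2 * k \<le> p"
  shows "clique_number (johnson_vertices p k) (johnson_adj k) = p - k + 1"
proof -
  let ?S = "card ` {C. is_clique (johnson_vertices p k) (johnson_adj k) C}"
  have fin: "finite {C. is_clique (johnson_vertices p k) (johnson_adj k) C}"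
    by (rule finite_subset[of _ "Pow (johnson_vertices p k)"]) (auto simp: is_clique_def)
  have mem: "p - k + 1 \<in> ?S" using clique_lower[of k p] k by force
  have ub: "\<forall>x\<in>?S. x \<le> p - k + 1" using clique_upper[OF k] by auto
  show ?thesis unfolding clique_number_def
    by (rule Max_eqI) (use fin mem ub in auto)
qed



lemma degree_nat:
  assumes S: "S \<in> johnson_vertices p k" and k: "k \<ge> 1" "k \<le> p"
  shows "card {T \<in> johnson_vertices p k. johnson_adj k S T} = k * (p - k)"
proof -
  have "real (card {T \<in> johnson_vertices p k. johnson_adj k S T}) = real (k * (p - k))"
    using degree_real[OF S k] k by (simp add: johnson_adj_jadj of_nat_diff)
  then show ?thesis by linarith
qed

lemma edges_double:
  assumes k: "k \<ge> 1" "k \<le> p"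
  shows "2 * num_edges (johnson_vertices p k) (johnson_adj k) = card (johnson_vertices p k) * (k * (p - k))"
proof -
  let ?V = "johnson_vertices p k" and ?E = "johnson_adj k"
  define Pairs where "Pairs = Sigma ?V (\<lambda>u. {v\<in>?V. ?E u v})"
  define f where "f = (\<lambda>(u::nat set, v::nat set). {u, v})"
  have irr: "\<not> ?E u u" if "u \<in> ?V" for u using that k by (simp add: johnson_adj_jadj jadj_irrefl)
  have symE: "?E u v = ?E v u" for u v unfolding johnson_adj_def by (simp add: Int_commute)
  have finP: "finite Pairs" unfolding Pairs_def by auto
  have cP: "card Pairs = card ?V * (k * (p - k))"
    unfolding Pairs_def using degree_nat[OF _ k] by simp
  have Ed: "{{u, v} | u v. u \<in> ?V \<and> v \<in> ?V \<and> u \<noteq> v \<and> ?E u v} = f ` Pairs"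
  proof
    show "{{u, v} | u v. u \<in> ?V \<and> v \<in> ?V \<and> u \<noteq> v \<and> ?E u v} \<subseteq> f ` Pairs"
    proof
      fix e assume "e \<in> {{u, v} | u v. u \<in> ?V \<and> v \<in> ?V \<and> u \<noteq> v \<and> ?E u v}"
      then obtain u v where uv: "e = {u,v}" "u \<in> ?V" "v \<in> ?V" "?E u v" by blast
      then have "(u,v) \<in> Pairs" by (simp add: Pairs_def)
      moreover have "e = f (u,v)" using uv by (simp add: f_def)
      ultimately show "e \<in> f ` Pairs" by blast
    qed
    show "f ` Pairs \<subseteq> {{u, v} | u v. u \<in> ?V \<and> v \<in> ?V \<and> u \<noteq> v \<and> ?E u v}"
    proof
      fix e assume "e \<in> f ` Pairs"
      then obtain x where x: "x \<in> Pairs" "e = f x" by blast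
      obtain u v where "x = (u, v)" by (cases x)
      with x have uv: "u \<in> ?V" "v \<in> ?V" "?E u v" "e = {u,v}" by (auto simp: Pairs_def f_def)
      then have "u \<noteq> v" using irr by blast
      with uv show "e \<in> {{u, v} | u v. u \<in> ?V \<and> v \<in> ?V \<and> u \<noteq> v \<and> ?E u v}" by blast
    qed
  qed
  have fib: "card {x \<in> Pairs. f x = e} = 2" if e: "e \<in> f ` Pairs" for e
  proof -
    obtain u v where uv: "(u, v) \<in> Pairs" "e = {u, v}" using e unfolding f_def by auto
    have uV: "u \<in> ?V" "v \<in> ?V" "?E u v" using uv unfolding Pairs_def by auto
    have ne: "u \<noteq> v" using irr uV by auto
    have "{x \<in> Pairs. f x = e} = {(u, v), (v, u)}"
    proof
      show "{x \<in> Pairs. f x = e} \<subseteq> {(u, v), (v, u)}"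
        using uv by (auto simp: f_def doubleton_eq_iff)
      show "{(u, v), (v, u)} \<subseteq> {x \<in> Pairs. f x = e}"
        using uV symE uv unfolding Pairs_def f_def by auto
    qed
    then show ?thesis using ne by simp
  qed
  have "card Pairs = (\<Sum>e\<in>f ` Pairs. card {x \<in> Pairs. f x = e})"
    using sum.image_gen[OF finP, of "\<lambda>_. 1::nat" f] by simp
  also have "\<dots> = (\<Sum>e\<in>f ` Pairs. 2)" using fib by simp
  also have "\<dots> = 2 * card (f ` Pairs)" by simp
  finally have "2 * card (f ` Pairs) = card Pairs" by simp
  then show ?thesis unfolding num_edges_def Ed cP .
qed



lemma choose3_real: "real (n choose 3) = real n * (real n - 1) * (real n - 2) / 6"
proof -
  have "real (n choose 3) = (real n gchoose 3)" by (simp add: binomial_gbinomial)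
  also have "(real n gchoose 3) * fact 3 = (\<Prod>i = 0..<3. real n - of_nat i)" by (rule gbinomial_mult_fact')
  then have "(real n gchoose 3) = (\<Prod>i = 0..<3. real n - of_nat i) / 6" by (simp add: fact_numeral)
  also have "(\<Prod>i = 0..<3. real n - of_nat i) = real n * (real n - 1) * (real n - 2)"
    by (simp add: eval_nat_numeral prod.atLeast0_lessThan_Suc)
  finally show ?thesis by simp
qed

lemma choose2_real: "real (n choose 2) = real n * (real n - 1) / 2"
proof -
  have "real (n choose 2) = (real n gchoose 2)" by (simp add: binomial_gbinomial)
  also have "(real n gchoose 2) * fact 2 = (\<Prod>i = 0..<2. real n - of_nat i)" by (rule gbinomial_mult_fact')
  then have "(real n gchoose 2) = (\<Prod>i = 0..<2. real n - of_nat i) / 2" by (simp add: fact_numeral)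
  also have "(\<Prod>i = 0..<2. real n - of_nat i) = real n * (real n - 1)"
    by (simp add: eval_nat_numeral prod.atLeast0_lessThan_Suc)
  finally show ?thesis by simp
qed

lemma poly3:
  fixes a b :: real
  assumes "a \<ge> 0" "b \<ge> 0"
  shows "6 * ((3+a+b) + 1) * ((3+a)^2 * (3+a+b) + ((3+a)*(3+a+b) - (3+a) - (3+a+b))^2)
     \<le> ((3+a)+(3+a+b)) * ((3+a)+(3+a+b) - 1) * ((3+a)+(3+a+b) - 2) * (3+a) * (3+a+b)"
proof -
  have "((3+a)+(3+a+b)) * ((3+a)+(3+a+b) - 1) * ((3+a)+(3+a+b) - 2) * (3+a) * (3+a+b)
     - 6 * ((3+a+b) + 1) * ((3+a)^2 * (3+a+b) + ((3+a)*(3+a+b) - (3+a) - (3+a+b))^2)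
     = 216 + 306*b + 135*b^2 + 30*b^3 + 3*b^4 + 612*a + 444*a*b + 110*a*b^2 + 15*a*b^3 + a*b^4
       + 498*a^2 + 204*a^2*b + 21*a^2*b^2 + a^2*b^3 + 178*a^3 + 36*a^3*b + 30*a^4 + 2*a^4*b + 2*a^5"
    by (simp add: algebra_simps power2_eq_square power3_eq_cube power4_eq_xxxx power_def)
  moreover have "0 \<le> 216 + 306*b + 135*b^2 + 30*b^3 + 3*b^4 + 612*a + 444*a*b + 110*a*b^2 + 15*a*b^3 + a*b^4
       + 498*a^2 + 204*a^2*b + 21*a^2*b^2 + a^2*b^3 + 178*a^3 + 36*a^3*b + 30*a^4 + 2*a^4*b + 2*a^5"
    using assms by (intro add_nonneg_nonneg mult_nonneg_nonneg zero_le_power) auto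
  ultimately show ?thesis by linarith
qed

lemma numeric:
  fixes k q :: nat assumes k2: "2 \<le> k" and kq: "k \<le> q"
  shows "(real q + 1) * (real k^2 * real q + (real k * real q - real k - real q)^2) \<le> real ((q+k) choose k) * real k * real q"
proof (cases "k = 2")
  case True
  have c: "real ((q+k) choose k) = (real q + 2) * (real q + 1) / 2"
    using True choose2_real[of "q+2"] by (simp add: algebra_simps)
  have q2: "real q \<ge> 2" using kq True by simp
  have "(real q + 1) * (real q^2 + 4) \<le> (real q + 1) * (real q^2 + 2 * real q)"
    using q2 by (intro mult_left_mono) auto
  moreover have "(real q + 1) * (real k^2 * real q + (real k * real q - real k - real q)^2) = (real q + 1) * (real q^2 + 4)"
    using True by (simp add: algebra_simps power2_eq_square)
  moreover have "real ((q+k) choose k) * real k * real q = (real q + 1) * (real q^2 + 2 * real q)"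
    using True c by (simp add: algebra_simps power2_eq_square)
  ultimately show ?thesis by simp
next
  case False
  then have k3: "3 \<le> k" using k2 by simp
  define a where "a = real k - 3"
  define b where "b = real q - real k"
  have a0: "a \<ge> 0" and b0: "b \<ge> 0" using k3 kq unfolding a_def b_def by auto
  have rk: "real k = 3 + a" and rq: "real q = 3 + a + b" unfolding a_def b_def by simp_all
  have mono: "(q+k) choose 3 \<le> (q+k) choose k" using k3 kq by (intro binomial_mono) auto
  have "6 * (real q + 1) * (real k^2 * real q + (real k * real q - real k - real q)^2)
        \<le> (real k + real q) * (real k + real q - 1) * (real k + real q - 2) * real k * real q"
    unfolding rk rq by (rule poly3[OF a0 b0])
  also have "\<dots> = real (q+k) * (real (q+k) - 1) * (real (q+k) - 2) * real k * real q"
    by (simp add: add.commute)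
  also have "\<dots> = 6 * real ((q+k) choose 3) * real k * real q"
    by (simp add: choose3_real)
  also have "\<dots> \<le> 6 * real ((q+k) choose k) * real k * real q"
    using mono by (intro mult_right_mono) auto
  finally have "6 * ((real q + 1) * (real k^2 * real q + (real k * real q - real k - real q)^2))
     \<le> 6 * (real ((q+k) choose k) * real k * real q)" by (simp only: mult.assoc)
  then show ?thesis by linarith
qed



theorem mainTheorem3:
  fixes p k :: nat
  assumes "k \<ge> 2" and "p \<ge> 2 * k"
  shows
    "let V = johnson_vertices p k; E = johnson_adj k;
         \<mu> = eigenvalues_desc (adj_matrix V E);
         m = num_edges V E;
         \<omega> = clique_number V E;
         npos = length (filter (\<lambda>x. x > 0) \<mu>);
         l = min npos \<omega>
     in (\<Sum>i<l. (\<mu> ! i)^2) \<le> 2 * real m * (real \<omega> - 1) / real \<omega>"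
proof -
  have k1: "k \<ge> 1" and kp: "k \<le> p" and k2: "k \<ge> 2" and p2k: "2 * k \<le> p" using assms by auto
  define V where "V = johnson_vertices p k"
  define E where "E = johnson_adj k"
  define mu where "mu = eigenvalues_desc (adj_matrix V E)"
  define m where "m = num_edges V E"
  define w where "w = clique_number V E"
  define npos where "npos = length (filter (\<lambda>x. x > 0) mu)"
  define l where "l = min npos w"
  define vs where "vs = (SOME vs. distinct vs \<and> set vs = V)"
  have "\<exists>vs. distinct vs \<and> set vs = V" unfolding V_def using finite_distinct_list JV_finite by metis
  then have vs: "distinct vs" "set vs = V" unfolding vs_def by (metis (mono_tags, lifting) someI_ex)+
  define N where "N = length vs"
  have cardV: "card V = N" unfolding N_def using vs distinct_card by metis
  have Npos: "N > 0" using cardV kp zero_less_binomial[OF kp] unfolding V_def by (simp add: JV_card)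
  define A where "A = adj_matrix V E"
  have Aeq: "A = mat N N (\<lambda>(i, j). if E (vs ! i) (vs ! j) then 1 else 0)"
    unfolding A_def adj_matrix_def Let_def vs_def[symmetric] N_def ..
  have Ac: "A \<in> carrier_mat N N" unfolding Aeq by simp
  have Aij: "A$$(i,j) = (if E (vs ! i) (vs ! j) then 1 else 0)" if "i < N" "j < N" for i j
    unfolding Aeq using that by simp
  have bij: "bij_betw ((!) vs) {..<N} V" unfolding N_def using vs by (intro bij_betw_nth) auto
  have reidx: "(\<Sum>i<N. g (vs ! i)) = (\<Sum>S\<in>V. g S)" for g :: "nat set \<Rightarrow> real"
    by (rule sum.reindex_bij_betw[OF bij])
  have vsV: "vs ! i \<in> V" if "i < N" for i using that vs unfolding N_def by auto
  have symE: "E S T = E T S" for S T unfolding E_def johnson_adj_def by (simp add: Int_commute)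
  have EJ: "E = jadj k" unfolding E_def using k1 by (simp add: fun_eq_iff johnson_adj_jadj)
  define d where "d = real k * (real p - real k)"
  define \<theta> where "\<theta> = real k * (real p - real k) - real p"
  have thd: "\<theta> < d" unfolding \<theta>_def d_def using kp k1 by simp
  have sym: "\<And>i j. i<N \<Longrightarrow> j<N \<Longrightarrow> A$$(i,j) = A$$(j,i)" using Aij symE by simp
  have rows: "\<And>i. i<N \<Longrightarrow> (\<Sum>j<N. A$$(i,j)) = d"
  proof -
    fix i assume i: "i < N"
    have "(\<Sum>j<N. A$$(i,j)) = (\<Sum>j<N. (\<lambda>T. if E (vs!i) T then 1 else 0) (vs ! j))"
      using i by (intro sum.cong refl) (simp add: Aij)
    also have "\<dots> = (\<Sum>T\<in>V. if E (vs!i) T then 1 else 0)" by (rule reidx)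
    also have "\<dots> = real (card {T\<in>V. E (vs!i) T})" by (simp add: sum_if_const V_def)
    also have "\<dots> = d" unfolding d_def EJ V_def using degree_real[OF vsV[OF i, unfolded V_def] k1 kp] .
    finally show "(\<Sum>j<N. A$$(i,j)) = d" .
  qed
  have quad: "\<And>x. (\<Sum>i<N. x i) = 0 \<Longrightarrow> (\<Sum>i<N. \<Sum>j<N. A$$(i,j) * x i * x j) \<le> \<theta> * (\<Sum>i<N. (x i)^2)"
  proof -
    fix x :: "nat \<Rightarrow> real" assume sx: "(\<Sum>i<N. x i) = 0"
    define f where "f S = x (the_inv_into {..<N} ((!) vs) S)" for S
    have fx: "f (vs ! i) = x i" if "i < N" for i
      unfolding f_def using bij that by (simp add: bij_betw_def the_inv_into_f_f)
    have s1: "(\<Sum>S\<in>johnson_vertices p k. f S) = 0"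
    proof -
      have "(\<Sum>S\<in>johnson_vertices p k. f S) = (\<Sum>i<N. f (vs ! i))" unfolding V_def[symmetric] by (rule reidx[symmetric])
      also have "\<dots> = (\<Sum>i<N. x i)" by (intro sum.cong refl) (simp add: fx)
      finally show ?thesis using sx by simp
    qed
    have "(\<Sum>i<N. \<Sum>j<N. A$$(i,j) * x i * x j) = (\<Sum>i<N. \<Sum>j<N. (if E (vs!i) (vs!j) then f (vs!i) * f (vs!j) else 0))"
      by (intro sum.cong refl) (simp add: Aij fx)
    also have "\<dots> = (\<Sum>i<N. (\<lambda>S. \<Sum>T\<in>V. (if E S T then f S * f T else 0)) (vs ! i))"
      by (intro sum.cong refl) (rule reidx)
    also have "\<dots> = (\<Sum>S\<in>V. \<Sum>T\<in>V. (if E S T then f S * f T else 0))" by (rule reidx)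
    also have "\<dots> = Qf p k f" unfolding Qf_def V_def EJ ..
    also have "\<dots> \<le> \<theta> * sq p k f" unfolding \<theta>_def by (rule quad_bound[OF kp s1])
    also have "sq p k f = (\<Sum>i<N. (x i)^2)"
    proof -
      have "sq p k f = (\<Sum>i<N. (f (vs ! i))^2)" unfolding sq_def V_def[symmetric] by (rule reidx[symmetric])
      also have "\<dots> = (\<Sum>i<N. (x i)^2)" by (intro sum.cong refl) (simp add: fx)
      finally show ?thesis .
    qed
    finally show "(\<Sum>i<N. \<Sum>j<N. A$$(i,j) * x i * x j) \<le> \<theta> * (\<Sum>i<N. (x i)^2)" .
  qed
  note rb = root_bound[OF Ac Npos sym rows quad thd]
  note ob = order_le1[OF Ac Npos sym rows quad thd]
  define M where "M = proots (char_poly A)"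
  have cp0: "char_poly A \<noteq> 0" using degree_monic_char_poly[OF Ac] by auto
  have mu_eq: "mu = rev (sorted_list_of_multiset M)" unfolding mu_def eigenvalues_desc_def M_def A_def ..
  have sorted: "\<And>i j. i \<le> j \<Longrightarrow> j < length mu \<Longrightarrow> mu!j \<le> mu!i"
  proof -
    fix i j assume ij: "i \<le> j" "j < length mu"
    let ?s = "sorted_list_of_multiset M"
    have "mu!j = ?s ! (length ?s - Suc j)" "mu!i = ?s ! (length ?s - Suc i)"
      using ij unfolding mu_eq by (simp_all add: rev_nth)
    moreover have "?s ! (length ?s - Suc j) \<le> ?s ! (length ?s - Suc i)"
      using ij unfolding mu_eq by (intro sorted_nth_mono) auto
    ultimately show "mu!j \<le> mu!i" by simp
  qed
  have vals: "\<And>x. x \<in> set mu \<Longrightarrow> x = d \<or> x \<le> \<theta>"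
    using rb cp0 unfolding mu_eq M_def by simp
  have cnt: "count (mset mu) d \<le> 1"
    using ob cp0 unfolding mu_eq M_def by simp
  have wv: "w = p - k + 1" unfolding w_def V_def E_def by (rule clique_number_johnson[OF k1 p2k])
  have lb: "(\<Sum>i<l. (mu!i)^2) \<le> d^2 + (real w - 1) * \<theta>^2"
    by (rule list_bound[OF sorted vals thd cnt]) (auto simp: l_def npos_def wv)
  define q where "q = p - k"
  have kq: "k \<le> q" unfolding q_def using p2k by simp
  have pq: "p = q + k" unfolding q_def using kp by simp
  have m2: "2 * m = N * (k * q)" unfolding m_def V_def E_def q_def cardV[symmetric]
    using edges_double[OF k1 kp] by (simp add: V_def)
  have NC: "N = (q + k) choose k" using cardV unfolding V_def by (simp add: JV_card pq)
  have num: "(real q + 1) * (real k^2 * real q + (real k * real q - real k - real q)^2) \<le> real ((q+k) choose k) * real k * real q"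
    by (rule numeric[OF k2 kq])
  have dq: "d = real k * real q" unfolding d_def pq by simp
  have tq: "\<theta> = real k * real q - real k - real q" unfolding \<theta>_def pq by (simp add: algebra_simps)
  have wq: "real w = real q + 1" unfolding wv pq by simp
  have "d^2 + (real w - 1) * \<theta>^2 \<le> 2 * real m * (real w - 1) / real w"
  proof -
    have "(d^2 + (real w - 1) * \<theta>^2) * real w = real q * ((real q + 1) * (real k^2 * real q + (real k * real q - real k - real q)^2))"
      unfolding dq tq wq by (simp add: algebra_simps power2_eq_square)
    also have "\<dots> \<le> real q * (real ((q+k) choose k) * real k * real q)"
      using num by (intro mult_left_mono) auto
    also have "\<dots> = 2 * real m * (real w - 1)"
    proof -
      have "2 * real m = real N * (real k * real q)" using m2 by (metis of_nat_mult of_nat_numeral)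
      then show ?thesis unfolding wq NC by (simp add: algebra_simps)
    qed
    finally show ?thesis using wq by (simp add: pos_le_divide_eq add_pos_nonneg)
  qed
  with lb have main: "(\<Sum>i<l. (mu!i)^2) \<le> 2 * real m * (real w - 1) / real w" by linarith
  show ?thesis using main by (simp only: Let_def V_def E_def mu_def m_def w_def npos_def l_def)
qed


end
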